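(* Let $E$ be a set and $T$ a set of infinitary propositional formulae over $E$, and let $C$ be the set of models of $T$. (a) If every formula of $T$ is a clause $\bigwedge X\Rightarrow\bigvee Y$ with $X\neq\emptyset$, then $(E,C)$ is rooted. (b) If every formula is a clause $\bigwedge X\Rightarrow\bigvee Y$ with $|X|=1$ or $Y=\emptyset$, then $C$ is closed under bounded unions. (c) If every formula is a clause with $|Y|\le1$, then $C$ is closed under nonempty intersections. (d) If every formula has the form $\bigwedge X\Rightarrow\big((\bigvee_{j\in J}\bigwedge Y_j)\wedge\bigwedge_{j,k\in J,j\ne k}\neg(\bigwedge Y_j\wedge\bigwedge Y_k)\big)$ with $X,Y_j\subseteq E$, then $C$ is closed under bounded nonempty intersections. (e) If every formula is a clause with $X$ finite, then $(E,C)$ has finite conflict. (f) If every formula is a clause with $|X|\le 2$, then $(E,C)$ has binary conflict. (g) If every formula is a clause with $|X|=1$, or with $X$ finite and $Y=\emptyset$, then $C$ is closed under finitely consistent unions. (h) If every formula is a clause with $|X|=1$, or with $|X|\le2$ and $Y=\emptyset$, then $C$ is closed under pairwise consistent unions. (i) If every formula has the form $\bigwedge X\Rightarrow\big((\bigvee_{j\in J}\bigwedge Y_j)\wedge\bigwedge_{j,k\in J,j\ne k}\neg(\bigwedge Z_{j,k}\wedge\bigwedge Z_{k,j})\big)$ with $X$ finite, $Y_j\subseteq E$, and each $Z_{j,k}$ a finite subset of $Y_j$, then $C$ is closed under finitely consistent nonempty intersections. (j) If every formula has the form $\big(\bigwedge X\Rightarrow\bigvee_{j\in J}\bigwedge Y_j\big)\wedge\bigwedge_{j,k\in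 J,j\neq k}\neg(e_{j,k}\wedge e_{k,j})$ with $|X|\le2$, $Y_j\subseteq E$ and $e_{j,k}\in Y_j$, then $C$ is closed under pairwise consistent nonempty intersections.
   Context: A model of $T$ is a subset $m\subseteq E$ (the true variables) making every formula of $T$ true; $\bigwedge$, $\bigvee$ may be infinitary. For a configuration structure $(E,C)$ with $C\subseteq\mathcal{P}(E)$: rooted means $\emptyset\in C$; $X$ is consistent if $X\subseteq z$ for some $z\in C$, finitely consistent if all its finite subsets are consistent, pairwise consistent if all its subsets of size $\le 2$ are consistent. Closed under bounded unions: $A\subseteq C$ and $\bigcup A$ consistent imply $\bigcup A\in C$; nonempty intersections: $\emptyset\ne A\subseteq C$ implies $\bigcap A\in C$; bounded nonempty intersections: $\emptyset\neq A\subseteq C$ with $\bigcup A$ consistent implies $\bigcap A\in C$; finitely (pairwise) consistent unions: $A\subseteq C$ with $\bigcup A$ finitely (pairwise) consistent implies $\bigcup A\in C$; finitely (pairwise) consistent nonempty intersections: $\emptyset\neq A\subseteq C$ with $\bigcup A$ finitely (pairwise) consistent implies $\bigcap A\in C$. $(E,C)$ has finite conflict if every $X\subseteq E$ such that every finite $Y\subseteq X$ satisfies $Y\subseteq z\subseteq X$ for some $z\in C$ lies in $C$; binary conflict: same with "$|Y|\le2$" in place of "finite". *)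

theory Defs
  imports Main
begin

text \<open>A formula over variables of type 'a is identified with its truth function on
  valuations, a valuation being the set of true variables.\<close>

type_synonym 'a form = "'a set \<Rightarrow> bool"

definition fvar :: "'a \<Rightarrow> 'a form" where "fvar e = (\<lambda>m. e \<in> m)"
definition fneg :: "'a form \<Rightarrow> 'a form" where "fneg \<phi> = (\<lambda>m. \<not> \<phi> m)"
definition fconj :: "'a form \<Rightarrow> 'a form \<Rightarrow> 'a form" where "fconj \<phi> \<psi> = (\<lambda>m. \<phi> m \<and> \<psi> m)"
definition fimp :: "'a form \<Rightarrow> 'a form \<Rightarrow> 'a form" where "fimp \<phi> \<psi> = (\<lambda>m. \<phi> m \<longrightarrow> \<psi> m)"
definition BigConj :: "'a form set \<Rightarrow> 'a form" where "BigConj S = (\<lambda>m. \<forall>\<phi>\<in>S. \<phi> m)"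
definition BigDisj :: "'a form set \<Rightarrow> 'a form" where "BigDisj S = (\<lambda>m. \<exists>\<phi>\<in>S. \<phi> m)"

definition models :: "'a set \<Rightarrow> 'a form set \<Rightarrow> 'a set set" where
  "models E T = {m. m \<subseteq> E \<and> (\<forall>\<phi>\<in>T. \<phi> m)}"

definition clause :: "'a set \<Rightarrow> 'a set \<Rightarrow> 'a form" where
  "clause X Y = fimp (BigConj (fvar ` X)) (BigDisj (fvar ` Y))"

definition clause_with :: "'a set \<Rightarrow> ('a set \<Rightarrow> 'a set \<Rightarrow> bool) \<Rightarrow> 'a form \<Rightarrow> bool" where
  "clause_with E P \<phi> = (\<exists>X Y. X \<subseteq> E \<and> Y \<subseteq> E \<and> P X Y \<and> \<phi> = clause X Y)"

definition form_d :: "'a set \<Rightarrow> 'j set \<Rightarrow> ('j \<Rightarrow> 'a set) \<Rightarrow> 'a form" where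
  "form_d X J Y = fimp (BigConj (fvar ` X))
     (fconj (BigDisj ((\<lambda>j. BigConj (fvar ` Y j)) ` J))
            (BigConj {fneg (fconj (BigConj (fvar ` Y j)) (BigConj (fvar ` Y k))) | j k.
                        j \<in> J \<and> k \<in> J \<and> j \<noteq> k}))"

definition form_i :: "'a set \<Rightarrow> 'j set \<Rightarrow> ('j \<Rightarrow> 'a set) \<Rightarrow> ('j \<Rightarrow> 'j \<Rightarrow> 'a set) \<Rightarrow> 'a form" where
  "form_i X J Y Z = fimp (BigConj (fvar ` X))
     (fconj (BigDisj ((\<lambda>j. BigConj (fvar ` Y j)) ` J))
            (BigConj {fneg (fconj (BigConj (fvar ` Z j k)) (BigConj (fvar ` Z k j))) | j k.
                        j \<in> J \<and> k \<in> J \<and> j \<noteq> k}))"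

definition form_j :: "'a set \<Rightarrow> 'j set \<Rightarrow> ('j \<Rightarrow> 'a set) \<Rightarrow> ('j \<Rightarrow> 'j \<Rightarrow> 'a) \<Rightarrow> 'a form" where
  "form_j X J Y e = fconj (fimp (BigConj (fvar ` X)) (BigDisj ((\<lambda>j. BigConj (fvar ` Y j)) ` J)))
            (BigConj {fneg (fconj (fvar (e j k)) (fvar (e k j))) | j k.
                        j \<in> J \<and> k \<in> J \<and> j \<noteq> k})"

definition rooted :: "'a set set \<Rightarrow> bool" where "rooted C = ({} \<in> C)"

definition consistent :: "'a set set \<Rightarrow> 'a set \<Rightarrow> bool" where
  "consistent C X = (\<exists>z\<in>C. X \<subseteq> z)"

definition fin_consistent :: "'a set set \<Rightarrow> 'a set \<Rightarrow> bool" where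
  "fin_consistent C X = (\<forall>Y. Y \<subseteq> X \<and> finite Y \<longrightarrow> consistent C Y)"

definition pw_consistent :: "'a set set \<Rightarrow> 'a set \<Rightarrow> bool" where
  "pw_consistent C X = (\<forall>Y. Y \<subseteq> X \<and> finite Y \<and> card Y \<le> 2 \<longrightarrow> consistent C Y)"

definition closed_bounded_unions :: "'a set set \<Rightarrow> bool" where
  "closed_bounded_unions C = (\<forall>A. A \<subseteq> C \<and> consistent C (\<Union>A) \<longrightarrow> \<Union>A \<in> C)"

definition closed_nonempty_inters :: "'a set set \<Rightarrow> bool" where
  "closed_nonempty_inters C = (\<forall>A. A \<noteq> {} \<and> A \<subseteq> C \<longrightarrow> \<Inter>A \<in> C)"

definition closed_bounded_nonempty_inters :: "'a set set \<Rightarrow> bool" where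
  "closed_bounded_nonempty_inters C =
     (\<forall>A. A \<noteq> {} \<and> A \<subseteq> C \<and> consistent C (\<Union>A) \<longrightarrow> \<Inter>A \<in> C)"

definition closed_fin_consistent_unions :: "'a set set \<Rightarrow> bool" where
  "closed_fin_consistent_unions C = (\<forall>A. A \<subseteq> C \<and> fin_consistent C (\<Union>A) \<longrightarrow> \<Union>A \<in> C)"

definition closed_pw_consistent_unions :: "'a set set \<Rightarrow> bool" where
  "closed_pw_consistent_unions C = (\<forall>A. A \<subseteq> C \<and> pw_consistent C (\<Union>A) \<longrightarrow> \<Union>A \<in> C)"

definition closed_fin_consistent_nonempty_inters :: "'a set set \<Rightarrow> bool" where
  "closed_fin_consistent_nonempty_inters C =
     (\<forall>A. A \<noteq> {} \<and> A \<subseteq> C \<and> fin_consistent C (\<Union>A) \<longrightarrow> \<Inter>A \<in> C)"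

definition closed_pw_consistent_nonempty_inters :: "'a set set \<Rightarrow> bool" where
  "closed_pw_consistent_nonempty_inters C =
     (\<forall>A. A \<noteq> {} \<and> A \<subseteq> C \<and> pw_consistent C (\<Union>A) \<longrightarrow> \<Inter>A \<in> C)"

definition finite_conflict :: "'a set \<Rightarrow> 'a set set \<Rightarrow> bool" where
  "finite_conflict E C = (\<forall>X. X \<subseteq> E \<and>
      (\<forall>Y. Y \<subseteq> X \<and> finite Y \<longrightarrow> (\<exists>z\<in>C. Y \<subseteq> z \<and> z \<subseteq> X)) \<longrightarrow> X \<in> C)"

definition binary_conflict :: "'a set \<Rightarrow> 'a set set \<Rightarrow> bool" where
  "binary_conflict E C = (\<forall>X. X \<subseteq> E \<and>
      (\<forall>Y. Y \<subseteq> X \<and> finite Y \<and> card Y \<le> 2 \<longrightarrow> (\<exists>z\<in>C. Y \<subseteq> z \<and> z \<subseteq> X)) \<longrightarrow> X \<in> C)"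

end

theory Submission
  imports Defs
begin


lemma clause_eval[simp]: "clause X Y m = (X \<subseteq> m \<longrightarrow> (\<exists>y\<in>Y. y \<in> m))"
  unfolding clause_def fimp_def BigConj_def BigDisj_def fvar_def by auto

lemma BigConj_pairs: "BigConj {f j k | j k. P j k} m = (\<forall>j k. P j k \<longrightarrow> f j k m)"
  unfolding BigConj_def by blast
lemma BigConj_var: "BigConj (fvar ` S) m = (S \<subseteq> m)"
  unfolding BigConj_def fvar_def by blast
lemma BigDisj_img: "BigDisj (g ` J) m = (\<exists>j\<in>J. g j m)"
  unfolding BigDisj_def by blast
lemma form_d_eval[simp]: "form_d X J Y m = (X \<subseteq> m \<longrightarrow> ((\<exists>j\<in>J. Y j \<subseteq> m) \<and>
   (\<forall>j\<in>J. \<forall>k\<in>J. j \<noteq> k \<longrightarrow> \<not> (Y j \<subseteq> m \<and> Y k \<subseteq> m))))"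
  unfolding form_d_def fimp_def fconj_def fneg_def BigConj_pairs BigConj_var BigDisj_img by auto

lemma form_i_eval[simp]: "form_i X J Y Z m = (X \<subseteq> m \<longrightarrow> ((\<exists>j\<in>J. Y j \<subseteq> m) \<and>
   (\<forall>j\<in>J. \<forall>k\<in>J. j \<noteq> k \<longrightarrow> \<not> (Z j k \<subseteq> m \<and> Z k j \<subseteq> m))))"
  unfolding form_i_def fimp_def fconj_def fneg_def BigConj_pairs BigConj_var BigDisj_img by auto

lemma form_j_eval[simp]: "form_j X J Y e m = ((X \<subseteq> m \<longrightarrow> (\<exists>j\<in>J. Y j \<subseteq> m)) \<and>
   (\<forall>j\<in>J. \<forall>k\<in>J. j \<noteq> k \<longrightarrow> \<not> (e j k \<in> m \<and> e k j \<in> m)))"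
  unfolding form_j_def fimp_def fconj_def fneg_def BigConj_pairs BigConj_var BigDisj_img fvar_def by auto

lemma models_iff: "m \<in> models E T = (m \<subseteq> E \<and> (\<forall>\<phi>\<in>T. \<phi> m))"
  unfolding models_def by auto

lemma clause_withE:
  assumes "\<forall>\<phi>\<in>T. clause_with E P \<phi>" "\<phi> \<in> T"
  obtains X Y where "P X Y" "\<phi> = clause X Y"
  using assms unfolding clause_with_def by blast

lemma part_a: "(\<forall>\<phi>\<in>T. clause_with E (\<lambda>X Y. X \<noteq> {}) \<phi>) \<Longrightarrow> rooted (models E T)"
  unfolding rooted_def models_iff clause_with_def by fastforce

lemma part_b: assumes "\<forall>\<phi>\<in>T. clause_with E (\<lambda>X Y. card X = 1 \<or> Y = {}) \<phi>"
  shows "closed_bounded_unions (models E T)"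
  unfolding closed_bounded_unions_def
proof (intro allI impI)
  fix A assume h: "A \<subseteq> models E T \<and> consistent (models E T) (\<Union>A)"
  then obtain z where z: "z \<in> models E T" "\<Union>A \<subseteq> z" unfolding consistent_def by blast
  show "\<Union>A \<in> models E T" unfolding models_iff
  proof (intro conjI ballI)
    show "\<Union>A \<subseteq> E" using z unfolding models_def by blast
  next
    fix \<phi> assume p: "\<phi> \<in> T"
    obtain X Y where XY: "card X = 1 \<or> Y = {}" "\<phi> = clause X Y"
      by (rule clause_withE[OF assms p])
    show "\<phi> (\<Union>A)"
    proof (cases "Y = {}")
      case True
      have "\<phi> z" using z(1) p unfolding models_def by blast
      then show ?thesis using XY True z by auto
    next
      case False
      then obtain x where x: "X = {x}" using XY card_1_singletonE by metis
      show ?thesis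
        unfolding XY x clause_eval
      proof
        assume "{x} \<subseteq> \<Union>A"
        then obtain a where a: "a \<in> A" "x \<in> a" by blast
        then have "\<phi> a" using h p unfolding models_def by blast
        then show "\<exists>y\<in>Y. y \<in> \<Union>A" using a XY x by auto
      qed
    qed
  qed
qed

lemma part_c: assumes "\<forall>\<phi>\<in>T. clause_with E (\<lambda>X Y. finite Y \<and> card Y \<le> 1) \<phi>"
  shows "closed_nonempty_inters (models E T)"
  unfolding closed_nonempty_inters_def
proof (intro allI impI)
  fix A assume h: "A \<noteq> {} \<and> A \<subseteq> models E T"
  then obtain a0 where a0: "a0 \<in> A" by blast
  show "\<Inter>A \<in> models E T" unfolding models_iff
  proof (intro conjI ballI)
    show "\<Inter>A \<subseteq> E" using h a0 unfolding models_def by blast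
  next
    fix \<phi> assume p: "\<phi> \<in> T"
    obtain X Y where XY0: "finite Y \<and> card Y \<le> 1" "\<phi> = clause X Y"
      by (rule clause_withE[OF assms p])
    note XY = conjunct1[OF XY0(1)] conjunct2[OF XY0(1)] XY0(2)
    have all: "\<And>a. a \<in> A \<Longrightarrow> \<phi> a" using h p unfolding models_def by blast
    have "Y = {} \<or> (\<exists>y. Y = {y})" using XY
    proof -
      have "card Y = 0 \<or> card Y = 1" using XY(2) by linarith
      then show ?thesis
      proof
        assume "card Y = 0" then show ?thesis using XY(1) by simp
      next
        assume "card Y = 1" then obtain y where "Y = {y}" by (rule card_1_singletonE)
        then show ?thesis by blast
      qed
    qed
    then show "\<phi> (\<Inter>A)"
    proof
      assume Y0: "Y = {}"
      show ?thesis unfolding XY(3) clause_eval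
      proof
        assume "X \<subseteq> \<Inter>A"
        then have "X \<subseteq> a0" using a0 by blast
        moreover have "clause X Y a0" using all[OF a0] XY(3) by simp
        ultimately show "\<exists>y\<in>Y. y \<in> \<Inter>A" using Y0 by simp
      qed
    next
      assume "\<exists>y. Y = {y}"
      then obtain y where y: "Y = {y}" by blast
      show ?thesis unfolding XY(3) clause_eval
      proof
        assume X: "X \<subseteq> \<Inter>A"
        have "\<forall>a\<in>A. y \<in> a"
        proof
          fix a assume a: "a \<in> A"
          then have "X \<subseteq> a" using X by blast
          moreover have "clause X Y a" using all[OF a] XY(3) by simp
          ultimately show "y \<in> a" using y by simp
        qed
        then show "\<exists>y\<in>Y. y \<in> \<Inter>A" using y by blast
      qed
    qed
  qed
qed

lemma part_d: assumes "\<forall>\<phi>\<in>T. \<exists>X (J :: 'j set) Y. X \<subseteq> E \<and> (\<forall>j\<in>J. Y j \<subseteq> E) \<and> \<phi> = form_d X J Y"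
  shows "closed_bounded_nonempty_inters (models E T)"
  unfolding closed_bounded_nonempty_inters_def
proof (intro allI impI)
  fix A assume h: "A \<noteq> {} \<and> A \<subseteq> models E T \<and> consistent (models E T) (\<Union>A)"
  then obtain z where z: "z \<in> models E T" "\<Union>A \<subseteq> z" unfolding consistent_def by blast
  obtain a0 where a0: "a0 \<in> A" using h by blast
  show "\<Inter>A \<in> models E T" unfolding models_iff
  proof (intro conjI ballI)
    show "\<Inter>A \<subseteq> E" using h a0 unfolding models_def by blast
  next
    fix \<phi> assume p: "\<phi> \<in> T"
    then obtain X and J :: "'j set" and Y where XY: "\<phi> = form_d X J Y"
      using assms by blast
    have all: "\<And>a. a \<in> A \<Longrightarrow> \<phi> a" using h p unfolding models_def by blast
    have pz: "\<phi> z" using z(1) p unfolding models_def by blast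
    show "\<phi> (\<Inter>A)" unfolding XY form_d_eval
    proof (intro impI conjI)
      assume X: "X \<subseteq> \<Inter>A"
      have Xz: "X \<subseteq> z" using X a0 z by blast
      obtain j0 where j0: "j0 \<in> J" "Y j0 \<subseteq> z" using pz Xz XY by auto
      have "\<forall>a\<in>A. Y j0 \<subseteq> a"
      proof
        fix a assume a: "a \<in> A"
        have Xa: "X \<subseteq> a" using X a by blast
        obtain j where j: "j \<in> J" "Y j \<subseteq> a" using all[OF a] Xa XY by auto
        have "Y j \<subseteq> z" using j a z by blast
        then have "j = j0" using pz Xz XY j j0 by auto
        then show "Y j0 \<subseteq> a" using j by simp
      qed
      then show "\<exists>j\<in>J. Y j \<subseteq> \<Inter>A" using j0 by blast
      have Xa0: "X \<subseteq> a0" using X a0 by blast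
      have u: "\<forall>j\<in>J. \<forall>k\<in>J. j \<noteq> k \<longrightarrow> \<not> (Y j \<subseteq> a0 \<and> Y k \<subseteq> a0)"
        using all[OF a0] Xa0 unfolding XY form_d_eval by blast
      show "\<forall>j\<in>J. \<forall>k\<in>J. j \<noteq> k \<longrightarrow> \<not> (Y j \<subseteq> \<Inter>A \<and> Y k \<subseteq> \<Inter>A)"
      proof (intro ballI impI notI)
        fix j k assume "j \<in> J" "k \<in> J" "j \<noteq> k" "Y j \<subseteq> \<Inter>A \<and> Y k \<subseteq> \<Inter>A"
        then show False using u a0 by blast
      qed
    qed
  qed
qed

lemma part_e: assumes "\<forall>\<phi>\<in>T. clause_with E (\<lambda>X Y. finite X) \<phi>"
  shows "finite_conflict E (models E T)"
  unfolding finite_conflict_def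
proof (intro allI impI)
  fix W assume h: "W \<subseteq> E \<and> (\<forall>Y. Y \<subseteq> W \<and> finite Y \<longrightarrow> (\<exists>z\<in>models E T. Y \<subseteq> z \<and> z \<subseteq> W))"
  show "W \<in> models E T" unfolding models_iff
  proof (intro conjI ballI)
    show "W \<subseteq> E" using h by blast
  next
    fix \<phi> assume p: "\<phi> \<in> T"
    obtain X Y where XY: "finite X" "\<phi> = clause X Y"
      by (rule clause_withE[OF assms p])
    show "\<phi> W" unfolding XY clause_eval
    proof
      assume "X \<subseteq> W"
      then obtain z where z: "z \<in> models E T" "X \<subseteq> z" "z \<subseteq> W" using h XY by blast
      have "\<phi> z" using z(1) p unfolding models_def by blast
      then show "\<exists>y\<in>Y. y \<in> W" using z XY by auto
    qed
  qed
qed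

lemma part_f: assumes "\<forall>\<phi>\<in>T. clause_with E (\<lambda>X Y. finite X \<and> card X \<le> 2) \<phi>"
  shows "binary_conflict E (models E T)"
  unfolding binary_conflict_def
proof (intro allI impI)
  fix W assume h: "W \<subseteq> E \<and> (\<forall>Y. Y \<subseteq> W \<and> finite Y \<and> card Y \<le> 2 \<longrightarrow> (\<exists>z\<in>models E T. Y \<subseteq> z \<and> z \<subseteq> W))"
  show "W \<in> models E T" unfolding models_iff
  proof (intro conjI ballI)
    show "W \<subseteq> E" using h by blast
  next
    fix \<phi> assume p: "\<phi> \<in> T"
    obtain X Y where XY0: "finite X \<and> card X \<le> 2" "\<phi> = clause X Y"
      by (rule clause_withE[OF assms p])
    note XY = conjunct1[OF XY0(1)] conjunct2[OF XY0(1)] XY0(2)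
    show "\<phi> W" unfolding XY clause_eval
    proof
      assume "X \<subseteq> W"
      then obtain z where z: "z \<in> models E T" "X \<subseteq> z" "z \<subseteq> W" using h XY by blast
      have "\<phi> z" using z(1) p unfolding models_def by blast
      then show "\<exists>y\<in>Y. y \<in> W" using z XY by auto
    qed
  qed
qed

lemma part_g: assumes "\<forall>\<phi>\<in>T. clause_with E (\<lambda>X Y. card X = 1 \<or> (finite X \<and> Y = {})) \<phi>"
  shows "closed_fin_consistent_unions (models E T)"
  unfolding closed_fin_consistent_unions_def
proof (intro allI impI)
  fix A assume h: "A \<subseteq> models E T \<and> fin_consistent (models E T) (\<Union>A)"
  show "\<Union>A \<in> models E T" unfolding models_iff
  proof (intro conjI ballI)
    show "\<Union>A \<subseteq> E" using h unfolding models_def by blast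
  next
    fix \<phi> assume p: "\<phi> \<in> T"
    obtain X Y where XY: "card X = 1 \<or> (finite X \<and> Y = {})" "\<phi> = clause X Y"
      by (rule clause_withE[OF assms p])
    show "\<phi> (\<Union>A)"
    proof (cases "card X = 1")
      case False
      show ?thesis unfolding XY clause_eval
      proof
        assume X: "X \<subseteq> \<Union>A"
        have fX: "finite X" using XY False by blast
        have "consistent (models E T) X" using h X fX unfolding fin_consistent_def by blast
        then obtain z where z: "z \<in> models E T" "X \<subseteq> z"
          unfolding consistent_def by blast
        have "\<phi> z" using z(1) p unfolding models_def by blast
        then show "\<exists>y\<in>Y. y \<in> \<Union>A" using z XY False by auto
      qed
    next
      case True
      then obtain x where x: "X = {x}" using card_1_singletonE by metis
      show ?thesis
        unfolding XY x clause_eval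
      proof
        assume "{x} \<subseteq> \<Union>A"
        then obtain a where a: "a \<in> A" "x \<in> a" by blast
        then have "\<phi> a" using h p unfolding models_def by blast
        then show "\<exists>y\<in>Y. y \<in> \<Union>A" using a XY x by auto
      qed
    qed
  qed
qed

lemma part_h: assumes "\<forall>\<phi>\<in>T. clause_with E (\<lambda>X Y. card X = 1 \<or> (finite X \<and> card X \<le> 2 \<and> Y = {})) \<phi>"
  shows "closed_pw_consistent_unions (models E T)"
  unfolding closed_pw_consistent_unions_def
proof (intro allI impI)
  fix A assume h: "A \<subseteq> models E T \<and> pw_consistent (models E T) (\<Union>A)"
  show "\<Union>A \<in> models E T" unfolding models_iff
  proof (intro conjI ballI)
    show "\<Union>A \<subseteq> E" using h unfolding models_def by blast
  next
    fix \<phi> assume p: "\<phi> \<in> T"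
    obtain X Y where XY: "card X = 1 \<or> (finite X \<and> card X \<le> 2 \<and> Y = {})" "\<phi> = clause X Y"
      by (rule clause_withE[OF assms p])
    show "\<phi> (\<Union>A)"
    proof (cases "card X = 1")
      case False
      show ?thesis unfolding XY clause_eval
      proof
        assume X: "X \<subseteq> \<Union>A"
        have fX: "finite X \<and> card X \<le> 2" using XY False by blast
        have "consistent (models E T) X" using h X fX unfolding pw_consistent_def by blast
        then obtain z where z: "z \<in> models E T" "X \<subseteq> z"
          unfolding consistent_def by blast
        have "\<phi> z" using z(1) p unfolding models_def by blast
        then show "\<exists>y\<in>Y. y \<in> \<Union>A" using z XY False by auto
      qed
    next
      case True
      then obtain x where x: "X = {x}" using card_1_singletonE by metis
      show ?thesis
        unfolding XY x clause_eval
      proof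
        assume "{x} \<subseteq> \<Union>A"
        then obtain a where a: "a \<in> A" "x \<in> a" by blast
        then have "\<phi> a" using h p unfolding models_def by blast
        then show "\<exists>y\<in>Y. y \<in> \<Union>A" using a XY x by auto
      qed
    qed
  qed
qed

lemma part_i: assumes "\<forall>\<phi>\<in>T. \<exists>X (J :: 'k set) Y Z. X \<subseteq> E \<and> finite X \<and> (\<forall>j\<in>J. Y j \<subseteq> E)
          \<and> (\<forall>j\<in>J. \<forall>k\<in>J. j \<noteq> k \<longrightarrow> finite (Z j k) \<and> Z j k \<subseteq> Y j) \<and> \<phi> = form_i X J Y Z"
  shows "closed_fin_consistent_nonempty_inters (models E T)"
  unfolding closed_fin_consistent_nonempty_inters_def
proof (intro allI impI)
  fix A assume h: "A \<noteq> {} \<and> A \<subseteq> models E T \<and> fin_consistent (models E T) (\<Union>A)"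
  obtain a0 where a0: "a0 \<in> A" using h by blast
  show "\<Inter>A \<in> models E T" unfolding models_iff
  proof (intro conjI ballI)
    show "\<Inter>A \<subseteq> E" using h a0 unfolding models_def by blast
  next
    fix \<phi> assume p: "\<phi> \<in> T"
    have "\<exists>X (J :: 'k set) Y Z. X \<subseteq> E \<and> finite X \<and> (\<forall>j\<in>J. Y j \<subseteq> E)
          \<and> (\<forall>j\<in>J. \<forall>k\<in>J. j \<noteq> k \<longrightarrow> finite (Z j k) \<and> Z j k \<subseteq> Y j) \<and> \<phi> = form_i X J Y Z"
      using assms p by (rule bspec)
    then obtain X and J :: "'k set" and Y Z where XY0: "X \<subseteq> E \<and> finite X \<and> (\<forall>j\<in>J. Y j \<subseteq> E)
          \<and> (\<forall>j\<in>J. \<forall>k\<in>J. j \<noteq> k \<longrightarrow> finite (Z j k) \<and> Z j k \<subseteq> Y j) \<and> \<phi> = form_i X J Y Z"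
      by (elim exE) (erule that)
    have XY: "finite X"
      "\<forall>j\<in>J. \<forall>k\<in>J. j \<noteq> k \<longrightarrow> finite (Z j k) \<and> Z j k \<subseteq> Y j" "\<phi> = form_i X J Y Z"
      using XY0 by simp_all
    have all: "\<And>a. a \<in> A \<Longrightarrow> \<phi> a" using h p unfolding models_def by blast
    show "\<phi> (\<Inter>A)" unfolding XY form_i_eval
    proof (intro impI conjI)
      assume X: "X \<subseteq> \<Inter>A"
      obtain j0 where j0: "j0 \<in> J" "Y j0 \<subseteq> a0" using all[OF a0] X a0 unfolding XY(3) form_i_eval by blast
      have "\<forall>a\<in>A. Y j0 \<subseteq> a"
      proof
        fix a assume a: "a \<in> A"
        have Xa: "X \<subseteq> a" using X a by blast
        obtain j where j: "j \<in> J" "Y j \<subseteq> a" using all[OF a] Xa unfolding XY(3) form_i_eval by blast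
        have "j = j0"
        proof (rule ccontr)
          assume ne: "j \<noteq> j0"
          let ?F = "X \<union> Z j0 j \<union> Z j j0"
          have zz: "finite (Z j0 j) \<and> Z j0 j \<subseteq> Y j0" "finite (Z j j0) \<and> Z j j0 \<subseteq> Y j"
            using XY(2) j(1) j0(1) ne by simp_all
          have "X \<subseteq> a0" using X a0 by blast
          then have "?F \<subseteq> \<Union>A" using zz a a0 j j0 by blast
          moreover have "finite ?F" using XY(1) zz by simp
          ultimately have "consistent (models E T) ?F"
            using h unfolding fin_consistent_def by blast
          then obtain z where z: "z \<in> models E T" "?F \<subseteq> z"
            unfolding consistent_def by blast
          have "\<phi> z" using z(1) p unfolding models_def by blast
          then have "\<not> (Z j0 j \<subseteq> z \<and> Z j j0 \<subseteq> z)" using z(2) j j0 ne unfolding XY(3) form_i_eval by blast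
          then show False using z(2) by blast
        qed
        then show "Y j0 \<subseteq> a" using j by simp
      qed
      then show "\<exists>j\<in>J. Y j \<subseteq> \<Inter>A" using j0 by blast
      have Xa0: "X \<subseteq> a0" using X a0 by blast
      have u: "\<forall>j\<in>J. \<forall>k\<in>J. j \<noteq> k \<longrightarrow> \<not> (Z j k \<subseteq> a0 \<and> Z k j \<subseteq> a0)"
        using all[OF a0] Xa0 unfolding XY(3) form_i_eval by blast
      show "\<forall>j\<in>J. \<forall>k\<in>J. j \<noteq> k \<longrightarrow> \<not> (Z j k \<subseteq> \<Inter>A \<and> Z k j \<subseteq> \<Inter>A)"
      proof (intro ballI impI notI)
        fix j k assume "j \<in> J" "k \<in> J" "j \<noteq> k" "Z j k \<subseteq> \<Inter>A \<and> Z k j \<subseteq> \<Inter>A"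
        then show False using u a0 by blast
      qed
    qed
  qed
qed

lemma part_j: assumes "\<forall>\<phi>\<in>T. \<exists>X (J :: 'l set) Y e. X \<subseteq> E \<and> finite X \<and> card X \<le> 2 \<and> (\<forall>j\<in>J. Y j \<subseteq> E)
          \<and> (\<forall>j\<in>J. \<forall>k\<in>J. j \<noteq> k \<longrightarrow> e j k \<in> Y j) \<and> \<phi> = form_j X J Y e"
  shows "closed_pw_consistent_nonempty_inters (models E T)"
  unfolding closed_pw_consistent_nonempty_inters_def
proof (intro allI impI)
  fix A assume h: "A \<noteq> {} \<and> A \<subseteq> models E T \<and> pw_consistent (models E T) (\<Union>A)"
  obtain a0 where a0: "a0 \<in> A" using h by blast
  show "\<Inter>A \<in> models E T" unfolding models_iff
  proof (intro conjI ballI)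
    show "\<Inter>A \<subseteq> E" using h a0 unfolding models_def by blast
  next
    fix \<phi> assume p: "\<phi> \<in> T"
    have "\<exists>X (J :: 'l set) Y e. X \<subseteq> E \<and> finite X \<and> card X \<le> 2 \<and> (\<forall>j\<in>J. Y j \<subseteq> E)
          \<and> (\<forall>j\<in>J. \<forall>k\<in>J. j \<noteq> k \<longrightarrow> e j k \<in> Y j) \<and> \<phi> = form_j X J Y e"
      using assms p by (rule bspec)
    then obtain X and J :: "'l set" and Y e where XY0: "X \<subseteq> E \<and> finite X \<and> card X \<le> 2 \<and> (\<forall>j\<in>J. Y j \<subseteq> E)
          \<and> (\<forall>j\<in>J. \<forall>k\<in>J. j \<noteq> k \<longrightarrow> e j k \<in> Y j) \<and> \<phi> = form_j X J Y e"
      by (elim exE) (erule that)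
    have XY:
      "\<forall>j\<in>J. \<forall>k\<in>J. j \<noteq> k \<longrightarrow> e j k \<in> Y j" "\<phi> = form_j X J Y e"
      using XY0 by simp_all
    have all: "\<And>a. a \<in> A \<Longrightarrow> \<phi> a" using h p unfolding models_def by blast
    show "\<phi> (\<Inter>A)" unfolding XY form_j_eval
    proof (intro impI conjI)
      assume X: "X \<subseteq> \<Inter>A"
      obtain j0 where j0: "j0 \<in> J" "Y j0 \<subseteq> a0" using all[OF a0] X a0 unfolding XY(2) form_j_eval by blast
      have "\<forall>a\<in>A. Y j0 \<subseteq> a"
      proof
        fix a assume a: "a \<in> A"
        have Xa: "X \<subseteq> a" using X a by blast
        obtain j where j: "j \<in> J" "Y j \<subseteq> a" using all[OF a] Xa unfolding XY(2) form_j_eval by blast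
        have "j = j0"
        proof (rule ccontr)
          assume ne: "j \<noteq> j0"
          let ?F = "{e j0 j, e j j0}"
          have ee: "e j0 j \<in> Y j0" "e j j0 \<in> Y j" using XY(1) j(1) j0(1) ne by simp_all
          have "?F \<subseteq> \<Union>A" using ee a a0 j(2) j0(2) by blast
          moreover have "finite ?F" "card ?F \<le> 2" by (auto simp: card_insert_if)
          ultimately have "consistent (models E T) ?F"
            using h unfolding pw_consistent_def by (meson)
          then obtain z where z: "z \<in> models E T" "?F \<subseteq> z"
            unfolding consistent_def by blast
          have "\<phi> z" using z(1) p unfolding models_def by blast
          then have "\<not> (e j0 j \<in> z \<and> e j j0 \<in> z)" using j j0 ne unfolding XY(2) form_j_eval by blast
          then show False using z(2) by blast
        qed
        then show "Y j0 \<subseteq> a" using j by simp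
      qed
      then show "\<exists>j\<in>J. Y j \<subseteq> \<Inter>A" using j0 by blast
    next
      have u: "\<forall>j\<in>J. \<forall>k\<in>J. j \<noteq> k \<longrightarrow> \<not> (e j k \<in> a0 \<and> e k j \<in> a0)"
        using all[OF a0] unfolding XY(2) form_j_eval by blast
      show "\<forall>j\<in>J. \<forall>k\<in>J. j \<noteq> k \<longrightarrow> \<not> (e j k \<in> \<Inter>A \<and> e k j \<in> \<Inter>A)"
      proof (intro ballI impI notI)
        fix j k assume "j \<in> J" "k \<in> J" "j \<noteq> k" "e j k \<in> \<Inter>A \<and> e k j \<in> \<Inter>A"
        then show False using u a0 by blast
      qed
    qed
  qed
qed

theorem mainTheorem13:
  fixes E :: "'a set" and T :: "'a form set"
  defines "C \<equiv> models E T"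
  shows
   "((\<forall>\<phi>\<in>T. clause_with E (\<lambda>X Y. X \<noteq> {}) \<phi>) \<longrightarrow> rooted C)
  \<and> ((\<forall>\<phi>\<in>T. clause_with E (\<lambda>X Y. card X = 1 \<or> Y = {}) \<phi>) \<longrightarrow> closed_bounded_unions C)
  \<and> ((\<forall>\<phi>\<in>T. clause_with E (\<lambda>X Y. finite Y \<and> card Y \<le> 1) \<phi>) \<longrightarrow> closed_nonempty_inters C)
  \<and> ((\<forall>\<phi>\<in>T. \<exists>X (J :: 'j set) Y. X \<subseteq> E \<and> (\<forall>j\<in>J. Y j \<subseteq> E) \<and> \<phi> = form_d X J Y)
        \<longrightarrow> closed_bounded_nonempty_inters C)
  \<and> ((\<forall>\<phi>\<in>T. clause_with E (\<lambda>X Y. finite X) \<phi>) \<longrightarrow> finite_conflict E C)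
  \<and> ((\<forall>\<phi>\<in>T. clause_with E (\<lambda>X Y. finite X \<and> card X \<le> 2) \<phi>) \<longrightarrow> binary_conflict E C)
  \<and> ((\<forall>\<phi>\<in>T. clause_with E (\<lambda>X Y. card X = 1 \<or> (finite X \<and> Y = {})) \<phi>)
        \<longrightarrow> closed_fin_consistent_unions C)
  \<and> ((\<forall>\<phi>\<in>T. clause_with E (\<lambda>X Y. card X = 1 \<or> (finite X \<and> card X \<le> 2 \<and> Y = {})) \<phi>)
        \<longrightarrow> closed_pw_consistent_unions C)
  \<and> ((\<forall>\<phi>\<in>T. \<exists>X (J :: 'k set) Y Z. X \<subseteq> E \<and> finite X \<and> (\<forall>j\<in>J. Y j \<subseteq> E)
          \<and> (\<forall>j\<in>J. \<forall>k\<in>J. j \<noteq> k \<longrightarrow> finite (Z j k) \<and> Z j k \<subseteq> Y j) \<and> \<phi> = form_i X J Y Z)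
        \<longrightarrow> closed_fin_consistent_nonempty_inters C)
  \<and> ((\<forall>\<phi>\<in>T. \<exists>X (J :: 'l set) Y e. X \<subseteq> E \<and> finite X \<and> card X \<le> 2 \<and> (\<forall>j\<in>J. Y j \<subseteq> E)
          \<and> (\<forall>j\<in>J. \<forall>k\<in>J. j \<noteq> k \<longrightarrow> e j k \<in> Y j) \<and> \<phi> = form_j X J Y e)
        \<longrightarrow> closed_pw_consistent_nonempty_inters C)"
  unfolding C_def
  apply (intro conjI impI)
  apply (erule part_a)
  apply (erule part_b)
  apply (erule part_c)
  apply (erule part_d)
  apply (erule part_e)
  apply (erule part_f)
  apply (erule part_g)
  apply (erule part_h)
  apply (erule part_i)
  apply (erule part_j)
  done

end
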